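(* Let $f,a_1,d_1,d_2\in\mathbb{C}$ with $\mathrm{Re}(f-a_1-d_1-d_2-1)>0$, such that the series below is well defined (no lower parameter is a nonpositive integer), $a_1\ne0$, and the quantities below are defined and $k$ is not a nonpositive integer. Put $$h=\frac{(\frac f2+\frac12)(\frac f2-\frac32)}{a_1},\qquad k=\frac{h(1+d_1+a_1-f)(1+d_2+a_1-f)}{d_1d_2-h(1+d_1+d_2+a_1-f)}.$$ Then $$ {}_{5}F_{4}\left[\begin{matrix} f-1,\ \frac f2+\frac32,\ a_1,\ d_1,\ d_2\\ \frac f2-\frac32,\ f-a_1,\ f-d_1,\ f-d_2\end{matrix};1\right]=\frac{\Gamma(f-d_1)\Gamma(f-d_2)\Gamma(f-a_1)\Gamma(f-a_1-d_1-d_2-1)}{\Gamma(f)\Gamma(f-d_1-d_2)\Gamma(f-a_1-d_1-1)\Gamma(f-a_1-d_2-1)}\cdot\frac{\Gamma(k)}{\Gamma(k+1)}.$$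
   Context: $(x)_n$ denotes the Pochhammer symbol: $(x)_0=1$, $(x)_n=x(x+1)\cdots(x+n-1)$ for $n\ge1$. The generalized hypergeometric function is $${}_{r+1}F_{r}\left[\begin{matrix} a_1,\dots,a_{r+1}\\ b_1,\dots,b_r\end{matrix};z\right]=\sum_{n=0}^{\infty}\frac{(a_1)_n\cdots(a_{r+1})_n}{(b_1)_n\cdots(b_r)_n\,n!}z^n ,$$ where no $b_i$ is a nonpositive integer. $\Gamma$ is Euler's gamma function. *)

theory Defs
  imports "HOL-Analysis.Analysis"
begin

definition hypergeom :: "complex list \<Rightarrow> complex list \<Rightarrow> complex \<Rightarrow> complex" where
  "hypergeom as bs z =
     (\<Sum>n. (\<Prod>a\<leftarrow>as. pochhammer a n) / (\<Prod>b\<leftarrow>bs. pochhammer b n) * z ^ n / of_nat (fact n))"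

end

theory Submission
  imports Defs
begin
lemma poch_nz: "(y::complex) \<notin> \<int>\<^sub>\<le>\<^sub>0 \<Longrightarrow> pochhammer y n \<noteq> 0"
  by (auto simp: pochhammer_eq_0_iff)

lemma pair_conv:
  fixes x y :: complex
  assumes y: "y \<notin> \<int>\<^sub>\<le>\<^sub>0"
  shows "convergent (\<lambda>n. pochhammer x n / pochhammer y n * exp ((y - x) * of_real (ln (of_nat n))))"
proof (cases "x \<in> \<int>\<^sub>\<le>\<^sub>0")
  case True
  then obtain k where k: "x = - of_nat k" by (auto elim!: nonpos_Ints_cases')
  have "eventually (\<lambda>n. pochhammer x n / pochhammer y n * exp ((y - x) * of_real (ln (of_nat n))) = 0) sequentially"
    using eventually_gt_at_top[of k]
    by eventually_elim (simp add: k pochhammer_of_nat_eq_0_lemma)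
  hence "(\<lambda>n. pochhammer x n / pochhammer y n * exp ((y - x) * of_real (ln (of_nat n)))) \<longlonglongrightarrow> 0"
    by (rule tendsto_eventually)
  thus ?thesis by (auto simp: convergent_def)
next
  case False
  have eq: "pochhammer x n / pochhammer y n * exp ((y - x) * of_real (ln (of_nat n))) =
        Gamma_series' y n / Gamma_series' x n" for n
    using poch_nz[OF y, of n] poch_nz[OF False, of n]
    by (simp add: Gamma_series'_def exp_diff left_diff_distrib field_simps)
  have "(\<lambda>n. Gamma_series' y n / Gamma_series' x n) \<longlonglongrightarrow> Gamma y / Gamma x"
    using False by (intro tendsto_intros Gamma_series'_LIMSEQ) (simp add: Gamma_eq_zero_iff)
  thus ?thesis unfolding eq by (auto simp: convergent_def)
qed

lemma pair_lim:
  fixes x y :: complex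
  assumes y: "y \<notin> \<int>\<^sub>\<le>\<^sub>0" and x: "x \<notin> \<int>\<^sub>\<le>\<^sub>0"
  shows "(\<lambda>n. pochhammer x n / pochhammer y n * exp ((y - x) * of_real (ln (of_nat n)))) \<longlonglongrightarrow> Gamma y / Gamma x"
proof -
  have eq: "pochhammer x n / pochhammer y n * exp ((y - x) * of_real (ln (of_nat n))) =
        Gamma_series' y n / Gamma_series' x n" for n
    using poch_nz[OF y, of n] poch_nz[OF x, of n]
    by (simp add: Gamma_series'_def exp_diff left_diff_distrib field_simps)
  have "(\<lambda>n. Gamma_series' y n / Gamma_series' x n) \<longlonglongrightarrow> Gamma y / Gamma x"
    using x by (intro tendsto_intros Gamma_series'_LIMSEQ) (simp add: Gamma_eq_zero_iff)
  thus ?thesis unfolding eq .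
qed

definition Qp :: "(complex \<times> complex) list \<Rightarrow> nat \<Rightarrow> complex" where
  "Qp ps n = (\<Prod>p\<leftarrow>ps. pochhammer (fst p) n / pochhammer (snd p) n)"
definition Ep :: "(complex \<times> complex) list \<Rightarrow> complex" where
  "Ep ps = (\<Sum>p\<leftarrow>ps. snd p - fst p)"

lemma Qp_conv:
  assumes "\<forall>p\<in>set ps. snd p \<notin> \<int>\<^sub>\<le>\<^sub>0"
  shows "convergent (\<lambda>n. Qp ps n * exp (Ep ps * of_real (ln (of_nat n))))"
  using assms
proof (induction ps)
  case Nil
  then show ?case by (simp add: Qp_def Ep_def convergent_const)
next
  case (Cons p ps)
  have "convergent (\<lambda>n. (pochhammer (fst p) n / pochhammer (snd p) n * exp ((snd p - fst p) * of_real (ln (of_nat n))))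
          * (Qp ps n * exp (Ep ps * of_real (ln (of_nat n)))))"
    using Cons by (intro convergent_mult[OF pair_conv Cons.IH]) auto
  moreover have "(\<lambda>n. (pochhammer (fst p) n / pochhammer (snd p) n * exp ((snd p - fst p) * of_real (ln (of_nat n))))
          * (Qp ps n * exp (Ep ps * of_real (ln (of_nat n))))) = (\<lambda>n. Qp (p # ps) n * exp (Ep (p # ps) * of_real (ln (of_nat n))))"
    by (rule ext) (simp add: Qp_def Ep_def distrib_right exp_add[symmetric] algebra_simps)
  ultimately show ?case by simp
qed

lemma Qp_bound:
  assumes "\<forall>p\<in>set ps. snd p \<notin> \<int>\<^sub>\<le>\<^sub>0"
  obtains C where "C > 0" "\<And>n. n \<ge> 1 \<Longrightarrow> norm (Qp ps n) \<le> C * real n powr (- Re (Ep ps))"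
proof -
  from Qp_conv[OF assms] have "Bseq (\<lambda>n. Qp ps n * exp (Ep ps * of_real (ln (of_nat n))))"
    by (rule convergent_imp_Bseq)
  then obtain C where C: "C > 0" "\<And>n. norm (Qp ps n * exp (Ep ps * of_real (ln (of_nat n)))) \<le> C"
    by (auto simp: Bseq_def)
  show ?thesis
  proof (rule that[OF C(1)])
    fix n :: nat assume n: "n \<ge> 1"
    have "norm (Qp ps n) * exp (Re (Ep ps) * ln (real n)) \<le> C"
      using C(2)[of n] by (simp add: norm_mult)
    hence "norm (Qp ps n) \<le> C / exp (Re (Ep ps) * ln (real n))"
      by (simp add: field_simps)
    also have "\<dots> = C * real n powr (- Re (Ep ps))"
      using n by (simp add: powr_def exp_minus field_simps)
    finally show "norm (Qp ps n) \<le> C * real n powr (- Re (Ep ps))" .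
  qed
qed

lemma powr_help: "(x::real) > 0 \<Longrightarrow> x powr (-r) * x powr k = x powr (k - r)"
  using powr_add[of x "-r" k] by simp

lemma Qp_summable:
  assumes "\<forall>p\<in>set ps. snd p \<notin> \<int>\<^sub>\<le>\<^sub>0" and R: "Re (Ep ps) > 2"
  shows "summable (\<lambda>n. norm (Qp ps n) * (1 + 2 * real n))"
proof -
  obtain C where C: "C > 0" "\<And>n. n \<ge> 1 \<Longrightarrow> norm (Qp ps n) \<le> C * real n powr (- Re (Ep ps))"
    using Qp_bound[OF assms(1)] by blast
  have "summable (\<lambda>n. 3 * C * real n powr (1 - Re (Ep ps)))"
    using R by (intro summable_mult) (simp add: summable_real_powr_iff)
  moreover have "eventually (\<lambda>n. norm (norm (Qp ps n) * (1 + 2 * real n)) \<le> 3 * C * real n powr (1 - Re (Ep ps))) sequentially"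
    using eventually_ge_at_top[of "1::nat"]
  proof eventually_elim
    case (elim n)
    have n: "real n \<ge> 1" using elim by simp
    have "norm (norm (Qp ps n) * (1 + 2 * real n)) = norm (Qp ps n) * (1 + 2 * real n)" by simp
    also have "\<dots> \<le> C * real n powr (- Re (Ep ps)) * (3 * real n)"
    proof (rule mult_mono[OF C(2)[OF elim]])
      show "0 \<le> C * real n powr (- Re (Ep ps))" using C(1) by simp
    qed (use n in auto)
    also have "\<dots> = 3 * C * (real n powr (- Re (Ep ps)) * real n powr 1)"
    proof -
      have "real n powr 1 = real n" using n by simp
      thus ?thesis by simp
    qed
    also have "\<dots> = 3 * C * real n powr (1 - Re (Ep ps))"
      using n by (subst powr_help) auto
    finally show ?case .
  qed
  ultimately show ?thesis by (rule summable_comparison_test_ev[rotated])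
qed

lemma Qp_tendsto0:
  assumes "\<forall>p\<in>set ps. snd p \<notin> \<int>\<^sub>\<le>\<^sub>0" and R: "Re (Ep ps) > 2"
  shows "(\<lambda>n. Qp ps n * (of_nat n * (of_nat n + w))) \<longlonglongrightarrow> 0"
proof -
  obtain C where C: "C > 0" "\<And>n. n \<ge> 1 \<Longrightarrow> norm (Qp ps n) \<le> C * real n powr (- Re (Ep ps))"
    using Qp_bound[OF assms(1)] by blast
  have L: "(\<lambda>n. C * (1 + norm w) * real n powr (2 - Re (Ep ps))) \<longlonglongrightarrow> C * (1 + norm w) * 0"
    by (intro tendsto_mult tendsto_const tendsto_neg_powr[OF _ filterlim_real_sequentially]) (use R in simp)
  have ev: "eventually (\<lambda>n. norm (Qp ps n * (of_nat n * (of_nat n + w))) \<le> C * (1 + norm w) * real n powr (2 - Re (Ep ps))) sequentially"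
    using eventually_ge_at_top[of "1::nat"]
  proof eventually_elim
    case (elim n)
    have n: "real n \<ge> 1" using elim by simp
    have "norm (of_nat n + w) \<le> real n + norm w"
      using norm_triangle_ineq[of "of_nat n" w] by simp
    also have "\<dots> \<le> (1 + norm w) * real n"
    proof -
      have "norm w * 1 \<le> norm w * real n" using n by (intro mult_left_mono) auto
      thus ?thesis by (simp add: distrib_right)
    qed
    finally have nw: "norm (of_nat n + w) \<le> (1 + norm w) * real n" .
    have "norm (Qp ps n * (of_nat n * (of_nat n + w))) = norm (Qp ps n) * (real n * norm (of_nat n + w))"
      by (simp add: norm_mult)
    also have "\<dots> \<le> C * real n powr (- Re (Ep ps)) * (real n * ((1 + norm w) * real n))"
    proof (rule mult_mono[OF C(2)[OF elim]])
      show "0 \<le> C * real n powr (- Re (Ep ps))" using C(1) by simp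
      show "real n * norm (of_nat n + w) \<le> real n * ((1 + norm w) * real n)"
        using nw n by (intro mult_left_mono) auto
    qed (use n in simp_all)
    also have "\<dots> = C * (1 + norm w) * (real n powr (- Re (Ep ps)) * real n powr 2)"
    proof -
      have "real n powr 2 = real n * real n" using n by (simp add: powr_numeral power2_eq_square)
      thus ?thesis by (simp only: mult_ac)
    qed
    also have "\<dots> = C * (1 + norm w) * real n powr (2 - Re (Ep ps))"
      using n by (subst powr_help) auto
    finally show ?case .
  qed
  show ?thesis using Lim_null_comparison[OF ev] L by simp
qed

definition base :: "complex \<Rightarrow> complex \<Rightarrow> complex \<Rightarrow> complex \<Rightarrow> nat \<Rightarrow> complex" where
  "base A b c d n = pochhammer A n * pochhammer b n * pochhammer c n * pochhammer d n /
     (fact n * pochhammer (1 + A - b) n * pochhammer (1 + A - c) n * pochhammer (1 + A - d) n)"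

definition dterm :: "complex \<Rightarrow> complex \<Rightarrow> complex \<Rightarrow> complex \<Rightarrow> nat \<Rightarrow> complex" where
  "dterm A b c d n = base A b c d n * (A + 2 * of_nat n) / A"

definition Hf :: "complex \<Rightarrow> complex \<Rightarrow> complex \<Rightarrow> complex \<Rightarrow> nat \<Rightarrow> complex" where
  "Hf A b c d n = base A b c d n * (of_nat n * (of_nat n + 1 + 2 * A - (b + c + d))) / (A * (1 + A - (b + c + d)))"

lemma poch_shift1: "(z::complex) \<noteq> 0 \<Longrightarrow> pochhammer (z + 1) n = pochhammer z n * (z + of_nat n) / z"
  using pochhammer_rec[of z n] pochhammer_Suc[of z n] by (simp add: field_simps)

lemma base_Suc:
  "base A b c d (Suc n) = base A b c d n * ((A + of_nat n) * (b + of_nat n) * (c + of_nat n) * (d + of_nat n) /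
     ((of_nat n + 1) * (1 + A - b + of_nat n) * (1 + A - c + of_nat n) * (1 + A - d + of_nat n)))"
  unfolding base_def pochhammer_Suc fact_Suc
  by (simp add: times_divide_times_eq mult_ac add_ac)

lemma nonpole_add: "(z::complex) \<notin> \<int>\<^sub>\<le>\<^sub>0 \<Longrightarrow> z + of_nat n \<noteq> 0"
proof
  assume "z \<notin> \<int>\<^sub>\<le>\<^sub>0" "z + of_nat n = 0"
  hence "z = - of_nat n" by (simp add: eq_neg_iff_add_eq_0)
  with \<open>z \<notin> \<int>\<^sub>\<le>\<^sub>0\<close> show False by simp
qed

lemma nonpole_shift: "(z::complex) \<notin> \<int>\<^sub>\<le>\<^sub>0 \<Longrightarrow> z + of_nat n \<notin> \<int>\<^sub>\<le>\<^sub>0"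
proof
  assume z: "z \<notin> \<int>\<^sub>\<le>\<^sub>0" and "z + of_nat n \<in> \<int>\<^sub>\<le>\<^sub>0"
  then obtain k where "z + of_nat n = - of_nat k" by (auto elim!: nonpos_Ints_cases')
  hence hz: "z = - of_nat (k + n)" by (simp add: algebra_simps eq_neg_iff_add_eq_0)
  have "z \<in> \<int>\<^sub>\<le>\<^sub>0" unfolding hz by (rule minus_of_nat_in_nonpos_Ints)
  with z show False by simp
qed

lemma base_shift:
  assumes "A \<noteq> 0" "1 + A - b \<notin> \<int>\<^sub>\<le>\<^sub>0" "1 + A - c \<notin> \<int>\<^sub>\<le>\<^sub>0" "1 + A - d \<notin> \<int>\<^sub>\<le>\<^sub>0"
  shows "base (A + 1) b c d n = base A b c d n * ((A + of_nat n) / A * ((1 + A - b) * (1 + A - c) * (1 + A - d)) /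
     ((1 + A - b + of_nat n) * (1 + A - c + of_nat n) * (1 + A - d + of_nat n)))"
proof -
  have e: "1 + (A + 1) - x = (1 + A - x) + 1" for x :: complex by simp
  have nz: "x \<notin> \<int>\<^sub>\<le>\<^sub>0 \<Longrightarrow> x \<noteq> 0" for x :: complex by auto
  note z = nz[OF assms(2)] nz[OF assms(3)] nz[OF assms(4)]
    poch_nz[OF assms(2), of n] poch_nz[OF assms(3), of n] poch_nz[OF assms(4), of n]
    nonpole_add[OF assms(2), of n] nonpole_add[OF assms(3), of n] nonpole_add[OF assms(4), of n]
  show ?thesis
    unfolding base_def e poch_shift1[OF assms(1)] poch_shift1[OF z(1)] poch_shift1[OF z(2)] poch_shift1[OF z(3)]
    using z assms(1) by (simp add: field_simps)
qed

lemma wz_poly: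
  fixes A b c d N :: complex
  shows "(1 + A - c - d) * (1 + A - b - d) * (1 + A - b - c) * (A + N) * (A + 1 + 2 * N)
     - (1 + A - (b + c + d)) * (A + 2 * N) * ((1 + A - b + N) * (1 + A - c + N) * (1 + A - d + N))
   = (A + N) * (b + N) * (c + N) * (d + N) * (N + 1 + 1 + 2 * A - (b + c + d))
     - N * (N + 1 + 2 * A - (b + c + d)) * ((1 + A - b + N) * (1 + A - c + N) * (1 + A - d + N))"
  by algebra

lemma canc3: "(p::complex) \<noteq> 0 \<Longrightarrow> a \<noteq> 0 \<Longrightarrow> s \<noteq> 0 \<Longrightarrow> m \<noteq> 0 \<Longrightarrow>
   (u * s) * (B * (q / (m * p)) * (m * w) / (a * s)) = B * u / (a * p) * (q * w)"
  by (simp add: field_simps)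
lemma canc4: "(p::complex) \<noteq> 0 \<Longrightarrow> a \<noteq> 0 \<Longrightarrow> s \<noteq> 0 \<Longrightarrow>
   (u * s) * (B * q / (a * s)) = B * u / (a * p) * (q * p)"
  by (simp add: field_simps)
lemma canc2: "(p::complex) \<noteq> 0 \<Longrightarrow> a \<noteq> 0 \<Longrightarrow>
   (u * s) * (B * q / a) = B * u / (a * p) * (s * q * p)"
  by (simp add: field_simps)
lemma canc1: "(p::complex) \<noteq> 0 \<Longrightarrow> a \<noteq> 0 \<Longrightarrow>
   D * (B * (q / a * u / p) * w) = B * u / (a * p) * (D * q * w)"
  by (simp add: field_simps)

lemma telescope:
  assumes A: "A \<noteq> 0" "A + 1 \<noteq> 0" and s: "1 + A - (b + c + d) \<noteq> 0"
    and np: "1 + A - b \<notin> \<int>\<^sub>\<le>\<^sub>0" "1 + A - c \<notin> \<int>\<^sub>\<le>\<^sub>0" "1 + A - d \<notin> \<int>\<^sub>\<le>\<^sub>0"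
  shows "((1 + A) * (1 + A - c - d) * (1 + A - b - d) * (1 + A - b - c)) * dterm (A + 1) b c d n
       - ((1 + A - b) * (1 + A - c) * (1 + A - d) * (1 + A - (b + c + d))) * dterm A b c d n
     = ((1 + A - b) * (1 + A - c) * (1 + A - d) * (1 + A - (b + c + d))) * (Hf A b c d (Suc n) - Hf A b c d n)"
proof -
  define N :: complex where "N = of_nat n"
  define B where "B = base A b c d n"
  define P where "P = (1 + A - b + N) * (1 + A - c + N) * (1 + A - d + N)"
  have nz: "x \<notin> \<int>\<^sub>\<le>\<^sub>0 \<Longrightarrow> x \<noteq> 0" for x :: complex by auto
  have P: "P \<noteq> 0" unfolding P_def N_def
    using nonpole_add[OF np(1), of n] nonpole_add[OF np(2), of n] nonpole_add[OF np(3), of n] by simp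
  have N1: "N + 1 \<noteq> 0" unfolding N_def by (metis of_nat_Suc of_nat_eq_0_iff add.commute nat.distinct(1))
  define U where "U = (1 + A - b) * (1 + A - c) * (1 + A - d)"
  define D3 where "D3 = (1 + A - c - d) * (1 + A - b - d) * (1 + A - b - c)"
  define S where "S = 1 + A - (b + c + d)"
  have dt1: "dterm (A + 1) b c d n = B * ((A + N) / A * U / P) * (A + 1 + 2 * N) / (A + 1)"
    unfolding dterm_def base_shift[OF A(1) np] B_def N_def P_def U_def by simp
  have dt0: "dterm A b c d n = B * (A + 2 * N) / A"
    unfolding dterm_def B_def N_def by simp
  have h1: "Hf A b c d (Suc n) = B * ((A + N) * (b + N) * (c + N) * (d + N) / ((N + 1) * P)) * ((N + 1) * (N + 1 + 1 + 2 * A - (b + c + d))) / (A * S)"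
    unfolding Hf_def base_Suc B_def N_def P_def S_def by (simp add: mult_ac add_ac)
  have h0: "Hf A b c d n = B * (N * (N + 1 + 2 * A - (b + c + d))) / (A * S)"
    unfolding Hf_def B_def N_def S_def by simp
  have T1: "((A + 1) * D3) * (B * ((A + N) / A * U / P) * (A + 1 + 2 * N) / (A + 1))
      = B * U / (A * P) * (D3 * (A + N) * (A + 1 + 2 * N))"
  proof -
    have "((A + 1) * D3) * (B * ((A + N) / A * U / P) * (A + 1 + 2 * N) / (A + 1))
        = D3 * (B * ((A + N) / A * U / P) * (A + 1 + 2 * N))" using A(2) by simp
    also have "\<dots> = B * U / (A * P) * (D3 * (A + N) * (A + 1 + 2 * N))"
      by (rule canc1[OF P A(1)])
    finally show ?thesis .
  qed
  have T2: "(U * S) * (B * (A + 2 * N) / A) = B * U / (A * P) * (S * (A + 2 * N) * P)"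
    by (rule canc2[OF P A(1)])
  have T3: "(U * S) * (B * ((A + N) * (b + N) * (c + N) * (d + N) / ((N + 1) * P)) * ((N + 1) * (N + 1 + 1 + 2 * A - (b + c + d))) / (A * S))
      = B * U / (A * P) * ((A + N) * (b + N) * (c + N) * (d + N) * (N + 1 + 1 + 2 * A - (b + c + d)))"
    using canc3[OF P A(1) _ N1] s unfolding S_def by blast
  have T4: "(U * S) * (B * (N * (N + 1 + 2 * A - (b + c + d))) / (A * S))
      = B * U / (A * P) * (N * (N + 1 + 2 * A - (b + c + d)) * P)"
    using canc4[OF P A(1)] s unfolding S_def by blast
  define X where "X = (A + N) * (b + N) * (c + N) * (d + N) * (N + 1 + 1 + 2 * A - (b + c + d))"
  define Y where "Y = N * (N + 1 + 2 * A - (b + c + d)) * P"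
  define Z where "Z = D3 * (A + N) * (A + 1 + 2 * N)"
  define W where "W = S * (A + 2 * N) * P"
  have "(U * S) * (Hf A b c d (Suc n) - Hf A b c d n) = (U * S) * Hf A b c d (Suc n) - (U * S) * Hf A b c d n"
    by (rule right_diff_distrib)
  also have "\<dots> = B * U / (A * P) * X - B * U / (A * P) * Y"
    unfolding h1 h0 T3 T4 X_def Y_def ..
  also have "\<dots> = B * U / (A * P) * (X - Y)" by (rule right_diff_distrib[symmetric])
  also have "X - Y = Z - W"
    unfolding X_def Y_def Z_def W_def P_def D3_def S_def by (simp only: wz_poly)
  also have "B * U / (A * P) * (Z - W) = B * U / (A * P) * Z - B * U / (A * P) * W"
    by (rule right_diff_distrib)
  also have "\<dots> = ((A + 1) * D3) * dterm (A + 1) b c d n - (U * S) * dterm A b c d n"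
    unfolding dt1 dt0 T1 T2 Z_def W_def ..
  finally show ?thesis unfolding U_def D3_def S_def by (simp only: mult_ac add_ac)
qed

definition psA :: "complex \<Rightarrow> complex \<Rightarrow> complex \<Rightarrow> complex \<Rightarrow> (complex \<times> complex) list" where
  "psA A b c d = [(A, 1), (b, 1 + A - b), (c, 1 + A - c), (d, 1 + A - d)]"

lemma base_Qp: "base A b c d n = Qp (psA A b c d) n"
  unfolding base_def Qp_def psA_def by (simp add: pochhammer_fact times_divide_times_eq mult_ac)

lemma Ep_psA: "Ep (psA A b c d) = 2 + 2 * (1 + A - (b + c + d))"
  unfolding Ep_def psA_def by (simp add: algebra_simps)

lemma psA_np:
  assumes "1 + A - b \<notin> \<int>\<^sub>\<le>\<^sub>0" "1 + A - c \<notin> \<int>\<^sub>\<le>\<^sub>0" "1 + A - d \<notin> \<int>\<^sub>\<le>\<^sub>0"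
  shows "\<forall>p\<in>set (psA A b c d). snd p \<notin> \<int>\<^sub>\<le>\<^sub>0"
  using assms unfolding psA_def by auto

locale dgood =
  fixes A b c d :: complex
  assumes A: "A \<notin> \<int>\<^sub>\<le>\<^sub>0"
    and re: "Re (1 + A - (b + c + d)) > 0"
    and np: "1 + A - b \<notin> \<int>\<^sub>\<le>\<^sub>0" "1 + A - c \<notin> \<int>\<^sub>\<le>\<^sub>0" "1 + A - d \<notin> \<int>\<^sub>\<le>\<^sub>0"
begin

lemma A0: "A \<noteq> 0" using A by auto

lemma s0: "1 + A - (b + c + d) \<noteq> 0"
proof
  assume "1 + A - (b + c + d) = 0"
  hence "Re (1 + A - (b + c + d)) = 0" by (simp only: zero_complex.simps)
  with re show False by simp
qed

lemma Ep_gt: "Re (Ep (psA A b c d)) > 2"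
  using re by (simp add: Ep_psA)

lemma summable_dterm: "summable (dterm A b c d)"
proof -
  have s: "summable (\<lambda>n. (1 + 1 / norm A) * (norm (Qp (psA A b c d) n) * (1 + 2 * real n)))"
    by (intro summable_mult Qp_summable psA_np np Ep_gt)
  show ?thesis
  proof (rule summable_comparison_test'[OF s])
    fix n :: nat
    have "norm (A + 2 * of_nat n) \<le> norm A + 2 * real n"
      using norm_triangle_ineq[of A "2 * of_nat n"] by (simp add: norm_mult)
    also have "\<dots> \<le> (1 + 2 * real n) * (norm A + 1)" by (simp add: algebra_simps)
    finally have h: "norm (A + 2 * of_nat n) / norm A \<le> (1 + 2 * real n) * (1 + 1 / norm A)"
      using A0 by (simp add: field_simps)
    have "norm (dterm A b c d n) = norm (Qp (psA A b c d) n) * (norm (A + 2 * of_nat n) / norm A)"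
      unfolding dterm_def base_Qp by (simp add: norm_mult norm_divide)
    also have "\<dots> \<le> norm (Qp (psA A b c d) n) * ((1 + 2 * real n) * (1 + 1 / norm A))"
      by (intro mult_left_mono h) auto
    finally show "norm (dterm A b c d n) \<le> (1 + 1 / norm A) * (norm (Qp (psA A b c d) n) * (1 + 2 * real n))"
      by (simp add: mult_ac)
  qed
qed

lemma Hf_tendsto: "Hf A b c d \<longlonglongrightarrow> 0"
proof -
  have "(\<lambda>n. Qp (psA A b c d) n * (of_nat n * (of_nat n + (1 + 2 * A - (b + c + d))))) \<longlonglongrightarrow> 0"
    by (intro Qp_tendsto0 psA_np np Ep_gt)
  hence "(\<lambda>n. Qp (psA A b c d) n * (of_nat n * (of_nat n + (1 + 2 * A - (b + c + d)))) / (A * (1 + A - (b + c + d)))) \<longlonglongrightarrow> 0 / (A * (1 + A - (b + c + d)))"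
    using A0 s0 by (intro tendsto_divide tendsto_const) auto
  moreover have "(\<lambda>n. Qp (psA A b c d) n * (of_nat n * (of_nat n + (1 + 2 * A - (b + c + d)))) / (A * (1 + A - (b + c + d)))) = Hf A b c d"
    by (rule ext) (simp add: Hf_def base_Qp add_ac)
  ultimately show ?thesis by simp
qed

lemma shift: "dgood (A + 1) b c d"
proof
  show "A + 1 \<notin> \<int>\<^sub>\<le>\<^sub>0" using nonpole_shift[OF A, of 1] by simp
  show "Re (1 + (A + 1) - (b + c + d)) > 0" using re by simp
  have e: "1 + (A + 1) - x = (1 + A - x) + of_nat 1" for x :: complex by simp
  show "1 + (A + 1) - b \<notin> \<int>\<^sub>\<le>\<^sub>0" "1 + (A + 1) - c \<notin> \<int>\<^sub>\<le>\<^sub>0" "1 + (A + 1) - d \<notin> \<int>\<^sub>\<le>\<^sub>0"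
    unfolding e by (intro nonpole_shift np)+
qed

lemma recur:
  "((1 + A) * (1 + A - c - d) * (1 + A - b - d) * (1 + A - b - c)) * suminf (dterm (A + 1) b c d)
   = ((1 + A - b) * (1 + A - c) * (1 + A - d) * (1 + A - (b + c + d))) * suminf (dterm A b c d)"
proof -
  define den where "den = (1 + A) * (1 + A - c - d) * (1 + A - b - d) * (1 + A - b - c)"
  define num where "num = (1 + A - b) * (1 + A - c) * (1 + A - d) * (1 + A - (b + c + d))"
  have A1: "A + 1 \<noteq> 0" using nonpole_shift[OF A, of 1] by auto
  have tel: "den * dterm (A + 1) b c d n - num * dterm A b c d n = num * (Hf A b c d (Suc n) - Hf A b c d n)" for n
    unfolding den_def num_def by (rule telescope[OF A0 A1 s0 np])
  have "(\<lambda>n. den * dterm (A + 1) b c d n - num * dterm A b c d n) sums (den * suminf (dterm (A + 1) b c d) - num * suminf (dterm A b c d))"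
    using dgood.summable_dterm[OF shift] summable_dterm
    by (intro sums_diff sums_mult summable_sums)
  hence "(\<lambda>N. \<Sum>n<N. den * dterm (A + 1) b c d n - num * dterm A b c d n) \<longlonglongrightarrow> (den * suminf (dterm (A + 1) b c d) - num * suminf (dterm A b c d))"
    by (simp add: sums_def)
  moreover have "(\<lambda>N. \<Sum>n<N. den * dterm (A + 1) b c d n - num * dterm A b c d n) = (\<lambda>N. num * Hf A b c d N)"
  proof
    fix N
    have "(\<Sum>n<N. den * dterm (A + 1) b c d n - num * dterm A b c d n) = num * (\<Sum>n<N. Hf A b c d (Suc n) - Hf A b c d n)"
      unfolding tel by (simp add: sum_distrib_left)
    also have "\<dots> = num * (Hf A b c d N - Hf A b c d 0)" by (simp only: sum_lessThan_telescope)
    also have "\<dots> = num * Hf A b c d N" by (simp add: Hf_def)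
    finally show "(\<Sum>n<N. den * dterm (A + 1) b c d n - num * dterm A b c d n) = num * Hf A b c d N" .
  qed
  moreover have "(\<lambda>N. num * Hf A b c d N) \<longlonglongrightarrow> num * 0"
    by (intro tendsto_mult tendsto_const Hf_tendsto)
  ultimately have "den * suminf (dterm (A + 1) b c d) - num * suminf (dterm A b c d) = num * 0"
    using LIMSEQ_unique by metis
  thus ?thesis unfolding den_def num_def by simp
qed

end

lemma Qp_Suc: "Qp ps (Suc n) = Qp ps n * (\<Prod>p\<leftarrow>ps. (fst p + of_nat n) / (snd p + of_nat n))"
  by (induction ps) (simp_all add: Qp_def pochhammer_Suc times_divide_times_eq mult_ac)

lemma key_aux: "(G::real) \<noteq> 0 \<Longrightarrow> G0 \<noteq> 0 \<Longrightarrow> X \<noteq> 0 \<Longrightarrow>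
  a / (G0 ^ 2 * G) * (b ^ 3 / X) = (a / G0 * (b / X) * (b / G0) * (b / G0)) * (G0 / G)"
  by (simp add: field_simps power2_eq_square power3_eq_cube)

lemma key_ineq:
  fixes al g t t0 x be :: real
  assumes "al \<ge> g" "g + t0 + x > 0" "t0 \<le> t" "x \<ge> 0" "be \<ge> 0"
  shows "(al + t + x) * (be + x) ^ 3 / ((1 + x) * (g + t + x) ^ 3)
     \<le> ((al + t0 + x) / (g + t0 + x) * ((be + x) / (1 + x)) * ((be + x) / (g + t0 + x)) * ((be + x) / (g + t0 + x)))
        * ((g + t0 + x) / (g + t + x))"
proof -
  define G where "G = g + t + x"
  define G0 where "G0 = g + t0 + x"
  have G0: "G0 > 0" using assms unfolding G0_def by simp
  have GG: "G0 \<le> G" using assms unfolding G_def G0_def by simp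
  have G: "G > 0" using G0 GG by simp
  have e1: "al + t + x = (al - g) + G" and e2: "al + t0 + x = (al - g) + G0" unfolding G_def G0_def by simp_all
  have main: "((al - g) + G) * G0 ^ 2 \<le> ((al - g) + G0) * G ^ 2"
  proof -
    have "(al - g) * G0 ^ 2 \<le> (al - g) * G ^ 2"
      using assms(1) GG G0 by (intro mult_left_mono power_mono) auto
    moreover have "G * G0 ^ 2 \<le> G0 * G ^ 2"
    proof -
      have "G * G0 ^ 2 = (G * G0) * G0" by (simp add: power2_eq_square)
      also have "\<dots> \<le> (G * G0) * G" using GG G G0 by (intro mult_left_mono) auto
      also have "\<dots> = G0 * G ^ 2" by (simp add: power2_eq_square)
      finally show ?thesis .
    qed
    ultimately show ?thesis by (simp add: algebra_simps)
  qed
  have bx: "(be + x) ^ 3 / (1 + x) \<ge> 0" using assms by simp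
  have "(al + t + x) * (be + x) ^ 3 / ((1 + x) * (g + t + x) ^ 3) = ((al - g) + G) / G ^ 3 * ((be + x) ^ 3 / (1 + x))"
    unfolding e1 G_def by (simp add: field_simps)
  also have "\<dots> \<le> ((al - g) + G0) / (G0 ^ 2 * G) * ((be + x) ^ 3 / (1 + x))"
  proof (rule mult_right_mono[OF _ bx])
    show "((al - g) + G) / G ^ 3 \<le> ((al - g) + G0) / (G0 ^ 2 * G)"
      using main G G0 by (simp add: divide_simps power2_eq_square power3_eq_cube)
  qed
  also have "\<dots> = ((al + t0 + x) / (g + t0 + x) * ((be + x) / (1 + x)) * ((be + x) / (g + t0 + x)) * ((be + x) / (g + t0 + x)))
        * ((g + t0 + x) / (g + t + x))"
  proof -
    have x1: "1 + x \<noteq> 0" using assms(4) by simp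
    show ?thesis
      unfolding e2[symmetric] G0_def[symmetric] G_def[symmetric] using G G0 x1
      by (intro key_aux) auto
  qed
  finally show ?thesis .
qed

definition rtW :: "real \<Rightarrow> real \<Rightarrow> real \<Rightarrow> nat \<Rightarrow> nat \<Rightarrow> real" where
  "rtW al be g m0 n = (al + m0 + n) / (g + m0 + n) * ((be + n) / (1 + n)) * ((be + n) / (g + m0 + n)) * ((be + n) / (g + m0 + n))"

definition psW :: "real \<Rightarrow> real \<Rightarrow> real \<Rightarrow> nat \<Rightarrow> (complex \<times> complex) list" where
  "psW al be g m0 = [(of_real (al + m0), of_real (g + m0)), (of_real be, 1), (of_real be, of_real (g + m0)), (of_real be, of_real (g + m0))]"

lemma norm_ratio_real: "x \<ge> 0 \<Longrightarrow> y > 0 \<Longrightarrow> norm ((of_real x + of_nat n) / (of_real y + of_nat n) :: complex) = (x + n) / (y + n)"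
proof -
  assume x: "x \<ge> 0" and y: "y > 0"
  have ex: "(of_real x + of_nat n :: complex) = of_real (x + real n)" by simp
  have ey: "(of_real y + of_nat n :: complex) = of_real (y + real n)" by simp
  show ?thesis unfolding ex ey norm_divide norm_of_real using x y by simp
qed

lemma psW_step:
  assumes "al \<ge> 0" "be \<ge> 0" "g + m0 > 0"
  shows "norm (Qp (psW al be g m0) (Suc n)) = norm (Qp (psW al be g m0) n) * rtW al be g m0 n"
proof -
  have e1: "norm ((of_real (al + m0) + of_nat n) / (of_real (g + m0) + of_nat n) :: complex) = (al + m0 + n) / (g + m0 + n)"
    using assms by (subst norm_ratio_real) auto
  have e2: "norm ((of_real be + of_nat n) / (1 + of_nat n) :: complex) = (be + n) / (1 + n)"
    using norm_ratio_real[of be 1 n] assms by simp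
  have e3: "norm ((of_real be + of_nat n) / (of_real (g + m0) + of_nat n) :: complex) = (be + n) / (g + m0 + n)"
    using assms by (subst norm_ratio_real) auto
  show ?thesis
    unfolding Qp_Suc norm_mult psW_def[of al be g m0] rtW_def
    by (simp only: prod_list.Cons prod_list.Nil list.map norm_mult fst_conv snd_conv e1 e2 e3 mult_1_right norm_one mult_1_left mult_ac)
qed

lemma factor_bound:
  fixes A b c d :: complex and al be g :: real
  assumes al: "al \<ge> norm A" "al \<ge> g" and be: "be \<ge> norm b" "be \<ge> norm c" "be \<ge> norm d"
    and g: "g \<le> Re (1 + A - b)" "g \<le> Re (1 + A - c)" "g \<le> Re (1 + A - d)"
    and m0: "g + real m0 > 0" "m0 \<le> m"
  shows "norm (\<Prod>p\<leftarrow>psA (A + of_nat m) b c d. (fst p + of_nat n) / (snd p + of_nat n))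
    \<le> rtW al be g m0 n * ((g + m0 + n) / (g + m + n))"
proof -
  define Z where "Z = g + m + n"
  have Z: "Z > 0" using m0 unfolding Z_def by simp
  have nb: "norm (x + of_nat n) \<le> be + n" if "norm x \<le> be" for x :: complex
    using norm_triangle_ineq[of x "of_nat n"] that by simp
  have nr: "Z \<le> norm (1 + (A + of_nat m) - x + of_nat n)" if "g \<le> Re (1 + A - x)" for x :: complex
  proof -
    have "Z \<le> Re (1 + (A + of_nat m) - x + of_nat n)" using that unfolding Z_def by simp
    also have "\<dots> \<le> norm (1 + (A + of_nat m) - x + of_nat n)" by (rule complex_Re_le_cmod)
    finally show ?thesis .
  qed
  have na: "norm (A + of_nat m + of_nat n) \<le> al + m + n"
  proof -
    have "norm (A + of_nat m + of_nat n) \<le> norm A + norm (of_nat m + of_nat n :: complex)"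
      using norm_triangle_ineq[of A "of_nat m + of_nat n"] by (simp add: add.assoc)
    also have "\<dots> = norm A + (m + n)" by (simp only: of_nat_add[symmetric] norm_of_nat)
    finally show ?thesis using al by simp
  qed
  have n1: "norm (1 + of_nat n :: complex) = 1 + n"
  proof -
    have "(1 + of_nat n :: complex) = of_nat (Suc n)" by simp
    thus ?thesis by (simp only: norm_of_nat)
  qed
  have fb: "norm (x + of_nat n) / norm (1 + (A + of_nat m) - x + of_nat n) \<le> (be + n) / Z"
    if "norm x \<le> be" "g \<le> Re (1 + A - x)" for x :: complex
    using nb[OF that(1)] nr[OF that(2)] Z order_trans[OF norm_ge_zero that(1)] by (intro frac_le) auto
  have "norm (\<Prod>p\<leftarrow>psA (A + of_nat m) b c d. (fst p + of_nat n) / (snd p + of_nat n))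
      = norm (A + of_nat m + of_nat n) / (1 + n) *
        (norm (b + of_nat n) / norm (1 + (A + of_nat m) - b + of_nat n)) *
        (norm (c + of_nat n) / norm (1 + (A + of_nat m) - c + of_nat n)) *
        (norm (d + of_nat n) / norm (1 + (A + of_nat m) - d + of_nat n))"
    unfolding psA_def
    by (simp only: prod_list.Cons prod_list.Nil list.map norm_mult norm_divide fst_conv snd_conv n1 mult_1_right mult.assoc)
  also have "\<dots> \<le> (al + m + n) / (1 + n) * ((be + n) / Z) * ((be + n) / Z) * ((be + n) / Z)"
  proof -
    have f1: "norm (A + of_nat m + of_nat n) / (1 + n) \<le> (al + m + n) / (1 + n)"
      by (rule divide_right_mono[OF na]) simp
    have p0: "0 \<le> (be + n) / Z" using Z be order_trans[OF norm_ge_zero be(1)] by simp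
    have q0: "0 \<le> norm x / norm y" for x y :: complex by simp
    have p1: "0 \<le> (al + m + n) / (1 + n)" using al order_trans[OF norm_ge_zero al(1)] by simp
    have "norm (A + of_nat m + of_nat n) / (1 + n) * (norm (b + of_nat n) / norm (1 + (A + of_nat m) - b + of_nat n))
        \<le> (al + m + n) / (1 + n) * ((be + n) / Z)"
      by (rule mult_mono[OF f1 fb[OF be(1) g(1)] p1 q0])
    moreover have "0 \<le> (al + m + n) / (1 + n) * ((be + n) / Z)" by (rule mult_nonneg_nonneg[OF p1 p0])
    ultimately have "norm (A + of_nat m + of_nat n) / (1 + n) * (norm (b + of_nat n) / norm (1 + (A + of_nat m) - b + of_nat n))
        * (norm (c + of_nat n) / norm (1 + (A + of_nat m) - c + of_nat n))
        \<le> (al + m + n) / (1 + n) * ((be + n) / Z) * ((be + n) / Z)"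
      by (rule mult_mono[OF _ fb[OF be(2) g(2)] _ q0])
    moreover have "0 \<le> (al + m + n) / (1 + n) * ((be + n) / Z) * ((be + n) / Z)"
      by (intro mult_nonneg_nonneg p0 p1)
    ultimately show ?thesis
      by (rule mult_mono[OF _ fb[OF be(3) g(3)] _ q0])
  qed
  also have "\<dots> = (al + m + n) * (be + n) ^ 3 / ((1 + n) * (g + m + n) ^ 3)"
    unfolding Z_def by (simp add: field_simps power3_eq_cube)
  also have "\<dots> \<le> rtW al be g m0 n * ((g + m0 + n) / (g + m + n))"
    unfolding rtW_def of_nat_add of_nat_1 using al be m0 by (intro key_ineq) (auto intro: order_trans[OF norm_ge_zero])
  finally show ?thesis .
qed

lemma Qp_0: "Qp ps 0 = 1" by (induction ps) (simp_all add: Qp_def)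

lemma rtW_nonneg: "al \<ge> 0 \<Longrightarrow> be \<ge> 0 \<Longrightarrow> g + real m0 > 0 \<Longrightarrow> rtW al be g m0 n \<ge> 0"
  unfolding rtW_def by (intro mult_nonneg_nonneg divide_nonneg_pos) auto

lemma Qp_shift_bound:
  fixes A b c d :: complex and al be g :: real
  assumes al: "al \<ge> norm A" "al \<ge> g" and be: "be \<ge> norm b" "be \<ge> norm c" "be \<ge> norm d"
    and g: "g \<le> Re (1 + A - b)" "g \<le> Re (1 + A - c)" "g \<le> Re (1 + A - d)"
    and m0: "g + real m0 > 0" "m0 \<le> m"
  shows "norm (Qp (psA (A + of_nat m) b c d) (Suc n)) \<le> (g + m0) / (g + m) * norm (Qp (psW al be g m0) (Suc n))"
proof (induction n)
  have al0: "al \<ge> 0" using al(1) norm_ge_zero order_trans by blast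
  have be0: "be \<ge> 0" using be(1) norm_ge_zero order_trans by blast
  note rtW_nonneg[OF al0 be0 m0(1)]
  case 0
  have "norm (Qp (psA (A + of_nat m) b c d) (Suc 0)) = norm (\<Prod>p\<leftarrow>psA (A + of_nat m) b c d. (fst p + of_nat 0) / (snd p + of_nat 0))"
    unfolding Qp_Suc Qp_0 by simp
  also have "\<dots> \<le> rtW al be g m0 0 * ((g + m0 + real 0) / (g + m + real 0))"
    by (rule factor_bound[OF al be g m0])
  also have "\<dots> = (g + m0) / (g + m) * norm (Qp (psW al be g m0) (Suc 0))"
    unfolding psW_step[OF al0 be0 m0(1)] Qp_0 by simp
  finally show ?case .
next
  case (Suc n)
  have al0: "al \<ge> 0" using al(1) norm_ge_zero order_trans by blast
  have be0: "be \<ge> 0" using be(1) norm_ge_zero order_trans by blast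
  have r0: "rtW al be g m0 (Suc n) \<ge> 0" by (rule rtW_nonneg[OF al0 be0 m0(1)])
  have gm: "g + real m > 0" using m0 by simp
  have q1: "(g + m0 + real (Suc n)) / (g + m + real (Suc n)) \<le> 1" using m0 by simp
  have c0: "(g + m0) / (g + m) \<ge> 0" using m0 gm by simp
  have "norm (Qp (psA (A + of_nat m) b c d) (Suc (Suc n))) = norm (Qp (psA (A + of_nat m) b c d) (Suc n)) *
      norm (\<Prod>p\<leftarrow>psA (A + of_nat m) b c d. (fst p + of_nat (Suc n)) / (snd p + of_nat (Suc n)))"
    by (subst Qp_Suc) (simp only: norm_mult)
  also have "\<dots> \<le> ((g + m0) / (g + m) * norm (Qp (psW al be g m0) (Suc n))) *
      (rtW al be g m0 (Suc n) * ((g + m0 + real (Suc n)) / (g + m + real (Suc n))))"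
    by (intro mult_mono Suc.IH factor_bound[OF al be g m0] mult_nonneg_nonneg c0 norm_ge_zero)
  also have "\<dots> \<le> ((g + m0) / (g + m) * norm (Qp (psW al be g m0) (Suc n))) * (rtW al be g m0 (Suc n) * 1)"
    by (intro mult_left_mono q1 r0 mult_nonneg_nonneg c0) auto
  also have "\<dots> = (g + m0) / (g + m) * norm (Qp (psW al be g m0) (Suc (Suc n)))"
    unfolding psW_step[OF al0 be0 m0(1), of "Suc n"] by simp
  finally show ?case .
qed

lemma dterm0: "A \<noteq> 0 \<Longrightarrow> dterm A b c d 0 = 1"
  by (simp add: dterm_def base_def)

context dgood
begin

lemma shiftn: "dgood (A + of_nat m) b c d"
proof (induction m)
  case 0 show ?case using dgood_axioms by simp
next
  case (Suc m)
  have e: "A + of_nat m + 1 = A + of_nat (Suc m)" by simp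
  from dgood.shift[OF Suc] show ?case unfolding e .
qed


lemma lim1: "(\<lambda>m. suminf (dterm (A + of_nat m) b c d)) \<longlonglongrightarrow> 1"
proof -
  define g where "g = min (Re (1 + A - b)) (min (Re (1 + A - c)) (Re (1 + A - d)))"
  define al where "al = norm A + \<bar>g\<bar>"
  define be where "be = norm b + norm c + norm d"
  define m0 where "m0 = nat \<lceil>3 * \<bar>g\<bar> + \<bar>Re A\<bar> + al + 3 * be + 3\<rceil>"
  have m0r: "real m0 \<ge> 3 * \<bar>g\<bar> + \<bar>Re A\<bar> + al + 3 * be + 3" unfolding m0_def by linarith
  have al: "al \<ge> norm A" "al \<ge> g" unfolding al_def using norm_ge_zero[of A] by linarith+
  have be: "be \<ge> norm b" "be \<ge> norm c" "be \<ge> norm d" unfolding be_def by auto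
  have be0: "be \<ge> 0" unfolding be_def by simp
  have gg: "g \<le> Re (1 + A - b)" "g \<le> Re (1 + A - c)" "g \<le> Re (1 + A - d)" unfolding g_def by auto
  have gm0: "g + real m0 > 0" using m0r be0 al by linarith
  define W where "W = psW al be g m0"
  have Wnp: "\<forall>p\<in>set W. snd p \<notin> \<int>\<^sub>\<le>\<^sub>0"
  proof -
    have "(g + real m0) \<notin> \<int>\<^sub>\<le>\<^sub>0" using gm0 by (auto dest: nonpos_Ints_nonpos)
    hence "of_real (g + real m0) \<notin> (\<int>\<^sub>\<le>\<^sub>0 :: complex set)"
      by (subst of_real_in_nonpos_Ints_iff)
    thus ?thesis unfolding W_def psW_def by auto
  qed
  have WE: "Re (Ep W) > 2"
    unfolding W_def psW_def Ep_def using m0r be0 al by (simp add: algebra_simps)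
  define K where "K = (\<Sum>k. norm (Qp W (Suc k)) * (1 + 2 * real (Suc k)))"
  have Ks: "summable (\<lambda>k. norm (Qp W (Suc k)) * (1 + 2 * real (Suc k)))"
    using Qp_summable[OF Wnp WE] by (subst summable_Suc_iff)
  have bound: "norm (suminf (dterm (A + of_nat m) b c d) - 1) \<le> (g + m0) / (g + m) * K" if m: "m \<ge> m0" for m
  proof -
    define A' where "A' = A + of_nat m"
    interpret G: dgood A' b c d unfolding A'_def by (rule shiftn)
    have ReA: "Re A' \<ge> 1" unfolding A'_def using m m0r al be0 by simp
    have nA: "norm A' \<ge> 1" using ReA complex_Re_le_cmod[of A'] by linarith
    have gm: "g + real m > 0" using gm0 m by simp
    have c0: "(g + m0) / (g + m) \<ge> 0" using gm0 gm by simp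
    have tb: "norm (dterm A' b c d (Suc k)) \<le> (g + m0) / (g + m) * (norm (Qp W (Suc k)) * (1 + 2 * real (Suc k)))" for k
    proof -
      have nn: "norm (2 * of_nat j :: complex) = 2 * real j" for j by (simp add: norm_mult)
      have "norm (A' + 2 * of_nat (Suc k)) \<le> norm A' + norm (2 * of_nat (Suc k) :: complex)"
        by (rule norm_triangle_ineq)
      also have "\<dots> = norm A' + 2 * real (Suc k)" by (simp only: nn)
      also have "\<dots> \<le> norm A' * (1 + 2 * real (Suc k))"
      proof -
        have "2 * real (Suc k) * 1 \<le> 2 * real (Suc k) * norm A'" using nA by (intro mult_left_mono) auto
        thus ?thesis by (simp add: distrib_left mult.commute)
      qed
      finally have h: "norm (A' + 2 * of_nat (Suc k)) / norm A' \<le> 1 + 2 * real (Suc k)"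
        using nA by (simp add: divide_le_eq mult.commute)
      have "norm (dterm A' b c d (Suc k)) = norm (Qp (psA A' b c d) (Suc k)) * (norm (A' + 2 * of_nat (Suc k)) / norm A')"
        unfolding dterm_def base_Qp by (simp add: norm_mult norm_divide)
      also have "\<dots> \<le> ((g + m0) / (g + m) * norm (Qp W (Suc k))) * (1 + 2 * real (Suc k))"
        unfolding A'_def W_def
        by (intro mult_mono Qp_shift_bound[OF al be gg gm0 m] h[unfolded A'_def] mult_nonneg_nonneg c0 norm_ge_zero divide_nonneg_nonneg)
      finally show ?thesis by (simp add: mult_ac)
    qed
    have s2: "summable (\<lambda>k. (g + m0) / (g + m) * (norm (Qp W (Suc k)) * (1 + 2 * real (Suc k))))"
      by (rule summable_mult[OF Ks])
    have sn: "summable (\<lambda>k. norm (dterm A' b c d (Suc k)))"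
      by (rule summable_comparison_test'[OF s2]) (use tb in simp)
    have "suminf (dterm A' b c d) - 1 = (\<Sum>k. dterm A' b c d (Suc k))"
      using suminf_split_head[OF G.summable_dterm] dterm0[OF G.A0] by simp
    hence "norm (suminf (dterm A' b c d) - 1) = norm (\<Sum>k. dterm A' b c d (Suc k))" by simp
    also have "\<dots> \<le> (\<Sum>k. norm (dterm A' b c d (Suc k)))" by (rule summable_norm[OF sn])
    also have "\<dots> \<le> (\<Sum>k. (g + m0) / (g + m) * (norm (Qp W (Suc k)) * (1 + 2 * real (Suc k))))"
      by (rule suminf_le[OF tb sn s2])
    also have "\<dots> = (g + m0) / (g + m) * K" unfolding K_def by (rule suminf_mult[OF Ks])
    finally show ?thesis unfolding A'_def .
  qed
  have "(\<lambda>m. (g + m0) * K * inverse (g + real m)) \<longlonglongrightarrow> (g + m0) * K * 0"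
    by (intro tendsto_mult tendsto_const tendsto_inverse_0_at_top
        filterlim_tendsto_add_at_top[OF tendsto_const filterlim_real_sequentially])
  hence L: "(\<lambda>m. (g + m0) / (g + m) * K) \<longlonglongrightarrow> 0" by (simp add: field_simps)
  have "(\<lambda>m. suminf (dterm (A + of_nat m) b c d) - 1) \<longlonglongrightarrow> 0"
  proof (rule Lim_null_comparison[OF _ L])
    show "\<forall>\<^sub>F m in sequentially. norm (suminf (dterm (A + of_nat m) b c d) - 1) \<le> (g + m0) / (g + m) * K"
      using eventually_ge_at_top[of m0] by eventually_elim (rule bound)
  qed
  hence "(\<lambda>m. (suminf (dterm (A + of_nat m) b c d) - 1) + 1) \<longlonglongrightarrow> 0 + 1"
    by (intro tendsto_add tendsto_const)
  thus ?thesis by simp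
qed

end

lemma Re_pos_nonpole: "Re (z::complex) > 0 \<Longrightarrow> z \<notin> \<int>\<^sub>\<le>\<^sub>0"
proof
  assume "Re z > 0" "z \<in> \<int>\<^sub>\<le>\<^sub>0"
  then obtain k where "z = - of_nat k" by (auto elim!: nonpos_Ints_cases')
  with \<open>Re z > 0\<close> show False by simp
qed

lemma dougall:
  assumes D: "dgood A b c d"
    and y: "1 + A - c - d \<notin> \<int>\<^sub>\<le>\<^sub>0" "1 + A - b - d \<notin> \<int>\<^sub>\<le>\<^sub>0" "1 + A - b - c \<notin> \<int>\<^sub>\<le>\<^sub>0"
  shows "suminf (dterm A b c d) =
    Gamma (1 + A - b) * Gamma (1 + A - c) * Gamma (1 + A - d) * Gamma (1 + A - (b + c + d)) /
    (Gamma (1 + A) * Gamma (1 + A - c - d) * Gamma (1 + A - b - d) * Gamma (1 + A - b - c))"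
proof -
  interpret dgood A b c d by (rule D)
  have y0: "1 + A \<notin> \<int>\<^sub>\<le>\<^sub>0" using nonpole_shift[OF A, of 1] by (simp add: add.commute)
  have xs: "1 + A - (b + c + d) \<notin> \<int>\<^sub>\<le>\<^sub>0" by (rule Re_pos_nonpole[OF re])
  define R where "R m = pochhammer (1 + A - b) m * pochhammer (1 + A - c) m * pochhammer (1 + A - d) m * pochhammer (1 + A - (b + c + d)) m /
      (pochhammer (1 + A) m * pochhammer (1 + A - c - d) m * pochhammer (1 + A - b - d) m * pochhammer (1 + A - b - c) m)" for m
  define S where "S x = suminf (dterm x b c d)" for x
  have rec: "S (A + of_nat m) = R m * S A" for m
  proof (induction m)
    case 0 show ?case by (simp add: R_def)
  next
    case (Suc m)
    interpret G: dgood "A + of_nat m" b c d by (rule shiftn)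
    have e: "1 + (A + of_nat m) - x = (1 + A - x) + of_nat m" for x by simp
    have e2: "1 + (A + of_nat m) = (1 + A) + of_nat m" by simp
    have den: "(1 + (A + of_nat m)) * (1 + (A + of_nat m) - c - d) * (1 + (A + of_nat m) - b - d) * (1 + (A + of_nat m) - b - c) \<noteq> 0"
    proof -
      have e3: "1 + (A + of_nat m) - x - w = (1 + A - x - w) + of_nat m" for x w by simp
      show ?thesis unfolding e3 e2 using nonpole_add[OF y0, of m] nonpole_add[OF y(1), of m] nonpole_add[OF y(2), of m] nonpole_add[OF y(3), of m]
        by (simp only: mult_eq_0_iff) (simp add: algebra_simps)
    qed
    have r: "S (A + of_nat m + 1) = ((1 + (A + of_nat m) - b) * (1 + (A + of_nat m) - c) * (1 + (A + of_nat m) - d) * (1 + (A + of_nat m) - (b + c + d))) /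
        ((1 + (A + of_nat m)) * (1 + (A + of_nat m) - c - d) * (1 + (A + of_nat m) - b - d) * (1 + (A + of_nat m) - b - c)) * S (A + of_nat m)"
      using G.recur den unfolding S_def by (simp add: field_simps)
    have "S (A + of_nat (Suc m)) = S (A + of_nat m + 1)" by (simp add: add_ac)
    also have "\<dots> = R (Suc m) * S A"
      unfolding r Suc.IH R_def pochhammer_Suc
      using den by (simp add: field_simps add_ac)
    finally show ?case .
  qed
  define L where "L = Gamma (1 + A) / Gamma (1 + A - b) * (Gamma (1 + A - c - d) / Gamma (1 + A - c)) *
     (Gamma (1 + A - b - d) / Gamma (1 + A - d)) * (Gamma (1 + A - b - c) / Gamma (1 + A - (b + c + d)))"
  have RL: "R \<longlonglongrightarrow> L"
  proof -
    have "(\<lambda>m. (pochhammer (1 + A - b) m / pochhammer (1 + A) m * exp (((1 + A) - (1 + A - b)) * of_real (ln (of_nat m)))) *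
        (pochhammer (1 + A - c) m / pochhammer (1 + A - c - d) m * exp (((1 + A - c - d) - (1 + A - c)) * of_real (ln (of_nat m)))) *
        (pochhammer (1 + A - d) m / pochhammer (1 + A - b - d) m * exp (((1 + A - b - d) - (1 + A - d)) * of_real (ln (of_nat m)))) *
        (pochhammer (1 + A - (b + c + d)) m / pochhammer (1 + A - b - c) m * exp (((1 + A - b - c) - (1 + A - (b + c + d))) * of_real (ln (of_nat m)))))
      \<longlonglongrightarrow> L"
      unfolding L_def
      by (intro tendsto_mult pair_lim y y0 xs np)
    moreover have "(\<lambda>m. (pochhammer (1 + A - b) m / pochhammer (1 + A) m * exp (((1 + A) - (1 + A - b)) * of_real (ln (of_nat m)))) *
        (pochhammer (1 + A - c) m / pochhammer (1 + A - c - d) m * exp (((1 + A - c - d) - (1 + A - c)) * of_real (ln (of_nat m)))) *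
        (pochhammer (1 + A - d) m / pochhammer (1 + A - b - d) m * exp (((1 + A - b - d) - (1 + A - d)) * of_real (ln (of_nat m)))) *
        (pochhammer (1 + A - (b + c + d)) m / pochhammer (1 + A - b - c) m * exp (((1 + A - b - c) - (1 + A - (b + c + d))) * of_real (ln (of_nat m))))) = R"
    proof
      fix m
      define l where "l = (of_real (ln (of_nat m)) :: complex)"
      have ex: "exp (((1 + A) - (1 + A - b)) * l) * exp (((1 + A - c - d) - (1 + A - c)) * l) *
          exp (((1 + A - b - d) - (1 + A - d)) * l) * exp (((1 + A - b - c) - (1 + A - (b + c + d))) * l) = 1"
        by (simp add: exp_add[symmetric] algebra_simps)
      show "(pochhammer (1 + A - b) m / pochhammer (1 + A) m * exp (((1 + A) - (1 + A - b)) * of_real (ln (of_nat m)))) *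
        (pochhammer (1 + A - c) m / pochhammer (1 + A - c - d) m * exp (((1 + A - c - d) - (1 + A - c)) * of_real (ln (of_nat m)))) *
        (pochhammer (1 + A - d) m / pochhammer (1 + A - b - d) m * exp (((1 + A - b - d) - (1 + A - d)) * of_real (ln (of_nat m)))) *
        (pochhammer (1 + A - (b + c + d)) m / pochhammer (1 + A - b - c) m * exp (((1 + A - b - c) - (1 + A - (b + c + d))) * of_real (ln (of_nat m)))) = R m"
        unfolding l_def[symmetric] R_def
        using ex by (simp only: times_divide_times_eq mult_ac) simp
    qed
    ultimately show ?thesis by simp
  qed
  have "(\<lambda>m. R m * S A) \<longlonglongrightarrow> L * S A" by (intro tendsto_mult RL tendsto_const)
  moreover have "(\<lambda>m. R m * S A) \<longlonglongrightarrow> 1" using lim1 unfolding S_def[symmetric] rec .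
  ultimately have LS: "L * S A = 1" using LIMSEQ_unique by blast
  have nz: "Gamma z \<noteq> 0" if "z \<notin> \<int>\<^sub>\<le>\<^sub>0" for z :: complex using that by (simp add: Gamma_eq_zero_iff)
  have "L \<noteq> 0" using LS by auto
  have "S A = 1 / L" using LS \<open>L \<noteq> 0\<close> by (simp add: field_simps)
  also have "\<dots> = Gamma (1 + A - b) * Gamma (1 + A - c) * Gamma (1 + A - d) * Gamma (1 + A - (b + c + d)) /
    (Gamma (1 + A) * Gamma (1 + A - c - d) * Gamma (1 + A - b - d) * Gamma (1 + A - b - c))"
    unfolding L_def using nz[OF np(1)] nz[OF np(2)] nz[OF np(3)] nz[OF xs] nz[OF y0] nz[OF y(1)] nz[OF y(2)] nz[OF y(3)]
    by (simp add: field_simps)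
  finally show ?thesis unfolding S_def .
qed

lemma poch_shift3: "pochhammer ((x::complex) + 3) n * (x * (x + 1) * (x + 2)) = pochhammer x n * ((x + of_nat n) * (x + of_nat n + 1) * (x + of_nat n + 2))"
proof -
  have "pochhammer x (3 + n) = pochhammer x 3 * pochhammer (x + 3) n"
    using pochhammer_product'[of x 3 n] by simp
  moreover have "pochhammer x (n + 3) = pochhammer x n * pochhammer (x + of_nat n) 3"
    by (rule pochhammer_product')
  moreover have "pochhammer y 3 = y * (y + 1) * (y + 2)" for y :: complex
    by (simp add: pochhammer_Suc numeral_3_eq_3 algebra_simps)
  ultimately show ?thesis by (simp add: add.commute mult.commute)
qed

lemma shift_alg:
  fixes pA Qb Qc Qd Pu Pv Pw fk n1 a b c d u v w Pa2 :: complex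
  assumes nz: "fk \<noteq> 0" "n1 \<noteq> 0" "u \<noteq> 0" "v \<noteq> 0" "w \<noteq> 0" "Pu \<noteq> 0" "Pv \<noteq> 0" "Pw \<noteq> 0" "a \<noteq> 0" "a2 \<noteq> 0"
    and hp: "pA * (a + n1) = a * (a + 1) * Pa2" and a2: "a2 = a + 2" and n1: "a + 2 * n1 = a2 + 2 * N"
  shows "pA * (b * Qb) * (c * Qc) * (d * Qd) / (n1 * fk * (u * Pu) * (v * Pv) * (w * Pw)) * (a + 2 * n1) / a * (n1 * (n1 + a))
    = ((a + 1) * a2 * b * c * d / (u * v * w)) * (Pa2 * Qb * Qc * Qd / (fk * Pu * Pv * Pw) * (a2 + 2 * N) / a2)"
proof -
  have "pA * (b * Qb) * (c * Qc) * (d * Qd) / (n1 * fk * (u * Pu) * (v * Pv) * (w * Pw)) * (a + 2 * n1) / a * (n1 * (n1 + a))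
     = (pA * (a + n1)) * (b * c * d * Qb * Qc * Qd * (a + 2 * n1)) / (fk * u * v * w * Pu * Pv * Pw * a)"
    using nz by (simp add: field_simps)
  also have "\<dots> = ((a + 1) * a2 * b * c * d / (u * v * w)) * (Pa2 * Qb * Qc * Qd / (fk * Pu * Pv * Pw) * (a2 + 2 * N) / a2)"
    unfolding hp n1 using nz by (simp add: field_simps)
  finally show ?thesis .
qed

lemma dterm_shift2:
  assumes np: "1 + a - b \<notin> \<int>\<^sub>\<le>\<^sub>0" "1 + a - c \<notin> \<int>\<^sub>\<le>\<^sub>0" "1 + a - d \<notin> \<int>\<^sub>\<le>\<^sub>0" and a: "a \<noteq> 0" "a + 2 \<noteq> 0"
  shows "dterm a b c d (Suc k) * (of_nat (Suc k) * (of_nat (Suc k) + a)) =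
    ((a + 1) * (a + 2) * b * c * d / ((1 + a - b) * (1 + a - c) * (1 + a - d))) * dterm (a + 2) (b + 1) (c + 1) (d + 1) k"
proof -
  have p2: "pochhammer a (Suc k) * (a + of_nat (Suc k)) = a * (a + 1) * pochhammer (a + 2) k"
  proof -
    have "pochhammer a (Suc k) * (a + of_nat (Suc k)) = pochhammer a (Suc (Suc k))" by (simp only: pochhammer_Suc)
    also have "\<dots> = a * ((a + 1) * pochhammer (a + 1 + 1) k)" by (simp only: pochhammer_rec)
    finally show ?thesis by (simp add: add.assoc mult.assoc)
  qed
  have e: "1 + (a + 2) - (x + 1) = (1 + a - x) + 1" for x :: complex by simp
  have nz: "1 + a - b \<noteq> 0" "1 + a - c \<noteq> 0" "1 + a - d \<noteq> 0" using np by auto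
  have px: "pochhammer x (Suc k) = x * pochhammer (x + 1) k" for x :: complex by (rule pochhammer_rec)
  have pz: "pochhammer (1 + a - x + 1) k \<noteq> 0" if "1 + a - x \<notin> \<int>\<^sub>\<le>\<^sub>0" for x
    using poch_nz[OF nonpole_shift[OF that, of 1], of k] by simp
  show ?thesis
    unfolding dterm_def base_def e px[of b] px[of c] px[of d] px[of "1 + a - b"] px[of "1 + a - c"] px[of "1 + a - d"] fact_Suc of_nat_mult
    by (rule shift_alg[OF _ _ nz pz[OF np(1)] pz[OF np(2)] pz[OF np(3)] a(1) a(2) p2]) (simp_all del: of_nat_Suc, simp add: algebra_simps)
qed

lemma kinv_aux: "(a1::complex) \<noteq> 0 \<Longrightarrow> H \<noteq> 0 \<Longrightarrow> P \<noteq> 0 \<Longrightarrow> Q \<noteq> 0 \<Longrightarrow>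
  1 / (H / (4 * a1) * (- P) * (- Q) / (d1 * d2 - H / (4 * a1) * (- E))) = (E + 4 * a1 * d1 * d2 / H) / (P * Q)"
  by (simp add: field_simps)

lemma final_aux:
  fixes g1 g2 g3 g4 G5 G6 G7 G8 E P Q u v w F F1 H a1 d1 d2 :: complex
  assumes "G5 \<noteq> 0" "G6 \<noteq> 0" "G7 \<noteq> 0" "G8 \<noteq> 0" "P \<noteq> 0" "Q \<noteq> 0" "u \<noteq> 0" "v \<noteq> 0" "w \<noteq> 0"
    "F \<noteq> 0" "F1 \<noteq> 0" "H \<noteq> 0"
  shows "g1 * g2 * g3 * (E * g4) / (G5 * G6 * (Q * G8) * (P * G7)) +
      4 / H * (F * F1 * a1 * d1 * d2 / (u * v * w) * ((u * g1) * (v * g2) * (w * g3) * g4 / ((F1 * (F * G5)) * G6 * (Q * G8) * (P * G7))))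
    = g2 * g3 * g1 * g4 / (G5 * G6 * G7 * G8) * ((E + 4 * a1 * d1 * d2 / H) / (P * Q))"
  using assms by (simp add: field_simps)

lemma distr_aux: "(B::complex) * (p / q) * (1 + c * M) = B * p / q + c * (B * p / q * M)"
  by (simp add: divide_inverse algebra_simps)

lemma frac_aux: "(x::complex) \<noteq> 0 \<Longrightarrow> y \<noteq> 0 \<Longrightarrow> z \<noteq> 0 \<Longrightarrow>
  p / y * (1 + M / (x * z)) = p * (x * z + M) / (x * y * z)"
  by (simp add: field_simps)

lemma R3_alg:
  fixes f N :: complex
  assumes x: "f/2 - 3/2 \<noteq> 0" "f/2 - 3/2 + 1 \<noteq> 0" "f/2 - 3/2 + 2 \<noteq> 0"
  shows "((f/2 - 3/2 + N) * (f/2 - 3/2 + N + 1) * (f/2 - 3/2 + N + 2)) / ((f/2 - 3/2) * (f/2 - 3/2 + 1) * (f/2 - 3/2 + 2))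
     = (f - 1 + 2 * N) / (f - 1) * (1 + 4 / ((f - 1)^2 - 4) * (N * (N + (f - 1))))"
proof -
  define x where "x = f/2 - 3/2"
  have x0: "x \<noteq> 0" "x + 1 \<noteq> 0" "x + 2 \<noteq> 0" using x unfolding x_def by auto
  have e1: "f - 1 = 2 * (x + 1)" and e2: "(f - 1)^2 - 4 = 4 * (x * (x + 2))" and e3: "f - 1 + 2 * N = 2 * (x + 1 + N)"
    unfolding x_def by (simp_all add: field_simps power2_eq_square)
  have "(f - 1 + 2 * N) / (f - 1) * (1 + 4 / ((f - 1)^2 - 4) * (N * (N + (f - 1))))
      = (x + 1 + N) / (x + 1) * (1 + (N * (N + 2 * (x + 1))) / (x * (x + 2)))"
  proof -
    have q1: "4 / (4 * (x * (x + 2))) = 1 / (x * (x + 2))" using mult_divide_mult_cancel_left[of 4 1 "x * (x + 2)"] by simp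
    have q2: "2 * (x + 1 + N) / (2 * (x + 1)) = (x + 1 + N) / (x + 1)" by (rule mult_divide_mult_cancel_left) simp
    show ?thesis unfolding e3 unfolding e2 unfolding e1 by (simp only: q1 q2) simp
  qed
  also have "\<dots> = ((x + N) * (x + N + 1) * (x + N + 2)) / (x * (x + 1) * (x + 2))"
  proof -
    have "(x + 1 + N) / (x + 1) * (1 + (N * (N + 2 * (x + 1))) / (x * (x + 2))) =
      (x + 1 + N) * (x * (x + 2) + N * (N + 2 * (x + 1))) / (x * (x + 1) * (x + 2))"
      by (rule frac_aux[OF x0(1) x0(2) x0(3)])
    also have "(x + 1 + N) * (x * (x + 2) + N * (N + 2 * (x + 1))) = (x + N) * (x + N + 1) * (x + N + 2)"
      by algebra
    finally show ?thesis .
  qed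
  finally show ?thesis unfolding x_def by simp
qed

theorem mainTheorem12:
  fixes f a1 d1 d2 :: complex
  defines "h \<equiv> (f/2 + 1/2) * (f/2 - 3/2) / a1"
  defines "k \<equiv> h * (1 + d1 + a1 - f) * (1 + d2 + a1 - f) / (d1 * d2 - h * (1 + d1 + d2 + a1 - f))"
  assumes conv: "Re (f - a1 - d1 - d2 - 1) > 0"
    and lower: "f/2 - 3/2 \<notin> \<int>\<^sub>\<le>\<^sub>0" "f - a1 \<notin> \<int>\<^sub>\<le>\<^sub>0" "f - d1 \<notin> \<int>\<^sub>\<le>\<^sub>0" "f - d2 \<notin> \<int>\<^sub>\<le>\<^sub>0"
    and a1: "a1 \<noteq> 0"
    and den: "d1 * d2 - h * (1 + d1 + d2 + a1 - f) \<noteq> 0"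
    and k: "k \<notin> \<int>\<^sub>\<le>\<^sub>0"
    and gammas: "f \<notin> \<int>\<^sub>\<le>\<^sub>0" "f - d1 - d2 \<notin> \<int>\<^sub>\<le>\<^sub>0"
      "f - a1 - d1 - 1 \<notin> \<int>\<^sub>\<le>\<^sub>0" "f - a1 - d2 - 1 \<notin> \<int>\<^sub>\<le>\<^sub>0" "k + 1 \<notin> \<int>\<^sub>\<le>\<^sub>0"
  shows "hypergeom [f - 1, f/2 + 3/2, a1, d1, d2] [f/2 - 3/2, f - a1, f - d1, f - d2] 1 =
    Gamma (f - d1) * Gamma (f - d2) * Gamma (f - a1) * Gamma (f - a1 - d1 - d2 - 1) /
    (Gamma f * Gamma (f - d1 - d2) * Gamma (f - a1 - d1 - 1) * Gamma (f - a1 - d2 - 1)) *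
    (Gamma k / Gamma (k + 1))"
proof -
  have nz: "z \<noteq> 0" if "z \<notin> \<int>\<^sub>\<le>\<^sub>0" for z :: complex using that by auto
  have sh1: "z + 1 \<notin> \<int>\<^sub>\<le>\<^sub>0" if "z \<notin> \<int>\<^sub>\<le>\<^sub>0" for z :: complex using nonpole_shift[OF that, of 1] by simp
  have fm1: "f - 1 \<notin> \<int>\<^sub>\<le>\<^sub>0"
  proof
    assume "f - 1 \<in> \<int>\<^sub>\<le>\<^sub>0"
    then obtain k where k: "f - 1 = - of_nat k" by (auto elim!: nonpos_Ints_cases')
    show False
    proof (cases k)
      case 0
      hence "f = 1" using k by simp
      hence "f/2 - 3/2 = - of_nat 1" by simp
      hence "f/2 - 3/2 \<in> \<int>\<^sub>\<le>\<^sub>0" by (simp only: minus_of_nat_in_nonpos_Ints)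
      with lower(1) show False by simp
    next
      case (Suc j)
      hence "f = - of_nat j" using k by (simp add: algebra_simps eq_neg_iff_add_eq_0)
      hence "f \<in> \<int>\<^sub>\<le>\<^sub>0" by (simp only: minus_of_nat_in_nonpos_Ints)
      with gammas(1) show False by simp
    qed
  qed
  have fp1: "f + 1 \<notin> \<int>\<^sub>\<le>\<^sub>0" by (rule sh1[OF gammas(1)])
  have fad2: "f - a1 - d2 \<notin> \<int>\<^sub>\<le>\<^sub>0" using sh1[OF gammas(4)] by simp
  have fad1: "f - a1 - d1 \<notin> \<int>\<^sub>\<le>\<^sub>0" using sh1[OF gammas(3)] by simp
  have Epos: "Re (f - a1 - d1 - d2 - 1) > 0" by (rule conv)
  have Enp: "f - a1 - d1 - d2 - 1 \<notin> \<int>\<^sub>\<le>\<^sub>0" by (rule Re_pos_nonpole[OF Epos])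
  have D1: "dgood (f - 1) a1 d1 d2"
  proof
    show "f - 1 \<notin> \<int>\<^sub>\<le>\<^sub>0" by (rule fm1)
    show "Re (1 + (f - 1) - (a1 + d1 + d2)) > 0" using conv by simp
    show "1 + (f - 1) - a1 \<notin> \<int>\<^sub>\<le>\<^sub>0" "1 + (f - 1) - d1 \<notin> \<int>\<^sub>\<le>\<^sub>0" "1 + (f - 1) - d2 \<notin> \<int>\<^sub>\<le>\<^sub>0"
      using lower by simp_all
  qed
  have D2: "dgood (f - 1 + 2) (a1 + 1) (d1 + 1) (d2 + 1)"
  proof
    show "f - 1 + 2 \<notin> \<int>\<^sub>\<le>\<^sub>0" using fp1 by (simp add: algebra_simps)
    show "Re (1 + (f - 1 + 2) - (a1 + 1 + (d1 + 1) + (d2 + 1))) > 0" using conv by simp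
    show "1 + (f - 1 + 2) - (a1 + 1) \<notin> \<int>\<^sub>\<le>\<^sub>0" "1 + (f - 1 + 2) - (d1 + 1) \<notin> \<int>\<^sub>\<le>\<^sub>0" "1 + (f - 1 + 2) - (d2 + 1) \<notin> \<int>\<^sub>\<le>\<^sub>0"
      using sh1[OF lower(2)] sh1[OF lower(3)] sh1[OF lower(4)] by (simp_all add: algebra_simps)
  qed
  define S0 where "S0 = suminf (dterm (f - 1) a1 d1 d2)"
  define S1 where "S1 = suminf (dterm (f - 1 + 2) (a1 + 1) (d1 + 1) (d2 + 1))"
  have dg1: "S0 = Gamma (1 + (f - 1) - a1) * Gamma (1 + (f - 1) - d1) * Gamma (1 + (f - 1) - d2) * Gamma (1 + (f - 1) - (a1 + d1 + d2)) /
    (Gamma (1 + (f - 1)) * Gamma (1 + (f - 1) - d1 - d2) * Gamma (1 + (f - 1) - a1 - d2) * Gamma (1 + (f - 1) - a1 - d1))"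
    unfolding S0_def by (rule dougall[OF D1]) (use gammas(2) fad2 fad1 in simp_all)
  have dg2: "S1 = Gamma (1 + (f - 1 + 2) - (a1 + 1)) * Gamma (1 + (f - 1 + 2) - (d1 + 1)) * Gamma (1 + (f - 1 + 2) - (d2 + 1)) * Gamma (1 + (f - 1 + 2) - (a1 + 1 + (d1 + 1) + (d2 + 1))) /
    (Gamma (1 + (f - 1 + 2)) * Gamma (1 + (f - 1 + 2) - (d1 + 1) - (d2 + 1)) * Gamma (1 + (f - 1 + 2) - (a1 + 1) - (d2 + 1)) * Gamma (1 + (f - 1 + 2) - (a1 + 1) - (d1 + 1)))"
    unfolding S1_def by (rule dougall[OF D2]) (use gammas(2) fad2 fad1 in \<open>simp_all add: algebra_simps\<close>)
  define c1 where "c1 = 4 / ((f - 1)^2 - 4)"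
  define K where "K = ((f - 1) + 1) * ((f - 1) + 2) * a1 * d1 * d2 / ((1 + (f - 1) - a1) * (1 + (f - 1) - d1) * (1 + (f - 1) - d2))"
  have tm: "(\<Prod>a\<leftarrow>[f - 1, f/2 + 3/2, a1, d1, d2]. pochhammer a n) / (\<Prod>b\<leftarrow>[f/2 - 3/2, f - a1, f - d1, f - d2]. pochhammer b n) * 1 ^ n / of_nat (fact n)
     = dterm (f - 1) a1 d1 d2 n + c1 * (dterm (f - 1) a1 d1 d2 n * (of_nat n * (of_nat n + (f - 1))))" for n
  proof -
    define x where "x = f/2 - 3/2"
    define N :: complex where "N = of_nat n"
    have xnp: "x \<notin> \<int>\<^sub>\<le>\<^sub>0" using lower(1) unfolding x_def .
    have px: "pochhammer x n \<noteq> 0" by (rule poch_nz[OF xnp])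
    have x0: "x \<noteq> 0" "x + 1 \<noteq> 0" "x + 2 \<noteq> 0"
    proof -
      show "x \<noteq> 0" using xnp by auto
      show "x + 1 \<noteq> 0"
      proof
        assume "x + 1 = 0" hence "x = - of_nat 1" by (simp add: eq_neg_iff_add_eq_0)
        hence "x \<in> \<int>\<^sub>\<le>\<^sub>0" by (simp only: minus_of_nat_in_nonpos_Ints)
        with xnp show False by simp
      qed
      show "x + 2 \<noteq> 0"
      proof
        assume "x + 2 = 0" hence "x = - of_nat 2" by (simp add: eq_neg_iff_add_eq_0)
        hence "x \<in> \<int>\<^sub>\<le>\<^sub>0" by (simp only: minus_of_nat_in_nonpos_Ints)
        with xnp show False by simp
      qed
    qed
    define Dx where "Dx = x * (x + 1) * (x + 2)"
    define Nx where "Nx = (x + N) * (x + N + 1) * (x + N + 2)"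
    have Dx0: "Dx \<noteq> 0" unfolding Dx_def using x0 by simp
    define R3 where "R3 = Nx / Dx"
    have x3: "f/2 + 3/2 = x + 3" unfolding x_def by simp
    have p32: "pochhammer (f/2 + 3/2) n = pochhammer x n * R3"
    proof -
      have "pochhammer (x + 3) n * Dx = pochhammer x n * Nx"
        unfolding N_def Dx_def Nx_def by (rule poch_shift3)
      hence "pochhammer (x + 3) n = pochhammer x n * Nx / Dx" using Dx0 by (simp add: eq_divide_eq)
      thus ?thesis unfolding x3 R3_def by simp
    qed
    have R3eq: "R3 = (f - 1 + 2 * N) / (f - 1) * (1 + c1 * (N * (N + (f - 1))))"
      unfolding R3_def Nx_def Dx_def c1_def x_def by (rule R3_alg[OF x0[unfolded x_def]])
    define B where "B = base (f - 1) a1 d1 d2 n"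
    have Beq: "B = pochhammer (f - 1) n * pochhammer a1 n * pochhammer d1 n * pochhammer d2 n /
       (fact n * pochhammer (f - a1) n * pochhammer (f - d1) n * pochhammer (f - d2) n)"
      unfolding B_def base_def by simp
    have pnz: "pochhammer (f - a1) n \<noteq> 0" "pochhammer (f - d1) n \<noteq> 0" "pochhammer (f - d2) n \<noteq> 0"
      using poch_nz[OF lower(2)] poch_nz[OF lower(3)] poch_nz[OF lower(4)] by auto
    have "(\<Prod>a\<leftarrow>[f - 1, f/2 + 3/2, a1, d1, d2]. pochhammer a n) / (\<Prod>b\<leftarrow>[f/2 - 3/2, f - a1, f - d1, f - d2]. pochhammer b n) * 1 ^ n / of_nat (fact n)
       = B * R3"
    proof -
      have L1: "(\<Prod>a\<leftarrow>[f - 1, f/2 + 3/2, a1, d1, d2]. pochhammer a n) = pochhammer (f - 1) n * pochhammer (f/2 + 3/2) n * pochhammer a1 n * pochhammer d1 n * pochhammer d2 n"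
        by (simp only: list.map prod_list.Cons prod_list.Nil mult_1_right mult.assoc)
      have L2: "(\<Prod>b\<leftarrow>[f/2 - 3/2, f - a1, f - d1, f - d2]. pochhammer b n) = pochhammer x n * pochhammer (f - a1) n * pochhammer (f - d1) n * pochhammer (f - d2) n"
        unfolding x_def by (simp only: list.map prod_list.Cons prod_list.Nil mult_1_right mult.assoc)
      show ?thesis unfolding L1 L2 Beq p32 using px pnz by (simp add: field_simps)
    qed
    also have "\<dots> = B * ((f - 1 + 2 * N) / (f - 1)) * (1 + c1 * (N * (N + (f - 1))))"
      unfolding R3eq by (simp add: mult.assoc)
    also have "\<dots> = dterm (f - 1) a1 d1 d2 n + c1 * (dterm (f - 1) a1 d1 d2 n * (of_nat n * (of_nat n + (f - 1))))"
      unfolding dterm_def B_def[symmetric] N_def[symmetric] by (rule distr_aux)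
    finally show ?thesis .
  qed
  have sum0: "dterm (f - 1) a1 d1 d2 sums S0"
    unfolding S0_def by (rule summable_sums[OF dgood.summable_dterm[OF D1]])
  have sum1: "dterm (f - 1 + 2) (a1 + 1) (d1 + 1) (d2 + 1) sums S1"
    unfolding S1_def by (rule summable_sums[OF dgood.summable_dterm[OF D2]])
  have shift: "dterm (f - 1) a1 d1 d2 (Suc j) * (of_nat (Suc j) * (of_nat (Suc j) + (f - 1))) = K * dterm (f - 1 + 2) (a1 + 1) (d1 + 1) (d2 + 1) j" for j
    unfolding K_def
  proof (rule dterm_shift2)
    show "1 + (f - 1) - a1 \<notin> \<int>\<^sub>\<le>\<^sub>0" "1 + (f - 1) - d1 \<notin> \<int>\<^sub>\<le>\<^sub>0" "1 + (f - 1) - d2 \<notin> \<int>\<^sub>\<le>\<^sub>0"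
      using lower by simp_all
    show "f - 1 \<noteq> 0" using fm1 by auto
    show "f - 1 + 2 \<noteq> 0" using fp1 by (auto simp: algebra_simps)
  qed
  have sumK: "(\<lambda>n. dterm (f - 1) a1 d1 d2 n * (of_nat n * (of_nat n + (f - 1)))) sums (K * S1)"
  proof -
    have "(\<lambda>j. dterm (f - 1) a1 d1 d2 (Suc j) * (of_nat (Suc j) * (of_nat (Suc j) + (f - 1)))) sums (K * S1)"
      unfolding shift by (rule sums_mult[OF sum1])
    hence "(\<lambda>n. dterm (f - 1) a1 d1 d2 n * (of_nat n * (of_nat n + (f - 1)))) sums (K * S1 + dterm (f - 1) a1 d1 d2 0 * (of_nat 0 * (of_nat 0 + (f - 1))))"
      by (subst (asm) sums_Suc_iff)
    thus ?thesis by simp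
  qed
  have hyp: "hypergeom [f - 1, f/2 + 3/2, a1, d1, d2] [f/2 - 3/2, f - a1, f - d1, f - d2] 1 = S0 + c1 * (K * S1)"
  proof -
    have "(\<lambda>n. dterm (f - 1) a1 d1 d2 n + c1 * (dterm (f - 1) a1 d1 d2 n * (of_nat n * (of_nat n + (f - 1))))) sums (S0 + c1 * (K * S1))"
      by (intro sums_add sum0 sums_mult sumK)
    thus ?thesis unfolding hypergeom_def tm by (rule sums_unique[symmetric])
  qed
  have dg1': "S0 = Gamma (f - a1) * Gamma (f - d1) * Gamma (f - d2) * Gamma (f - a1 - d1 - d2 - 1 + 1) /
    (Gamma f * Gamma (f - d1 - d2) * Gamma (f - a1 - d2 - 1 + 1) * Gamma (f - a1 - d1 - 1 + 1))"
    using dg1 by (simp add: algebra_simps)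
  have dg2': "S1 = Gamma (f - a1 + 1) * Gamma (f - d1 + 1) * Gamma (f - d2 + 1) * Gamma (f - a1 - d1 - d2 - 1) /
    (Gamma (f + 1 + 1) * Gamma (f - d1 - d2) * Gamma (f - a1 - d2 - 1 + 1) * Gamma (f - a1 - d1 - 1 + 1))"
    using dg2 by (simp add: algebra_simps)
  define g1 where "g1 = Gamma (f - a1)"
  define g2 where "g2 = Gamma (f - d1)"
  define g3 where "g3 = Gamma (f - d2)"
  define g4 where "g4 = Gamma (f - a1 - d1 - d2 - 1)"
  define G5 where "G5 = Gamma f"
  define G6 where "G6 = Gamma (f - d1 - d2)"
  define G7 where "G7 = Gamma (f - a1 - d1 - 1)"
  define G8 where "G8 = Gamma (f - a1 - d2 - 1)"
  define E where "E = f - a1 - d1 - d2 - 1"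
  define P where "P = f - a1 - d1 - 1"
  define Q where "Q = f - a1 - d2 - 1"
  define u where "u = f - a1"
  define v where "v = f - d1"
  define w where "w = f - d2"
  define H where "H = (f - 1)^2 - 4"
  define F1 where "F1 = f + 1"
  have S0e: "S0 = g1 * g2 * g3 * (E * g4) / (G5 * G6 * (Q * G8) * (P * G7))"
    unfolding dg1' Gamma_plus1[OF Enp] Gamma_plus1[OF gammas(4)] Gamma_plus1[OF gammas(3)]
      g1_def g2_def g3_def g4_def G5_def G6_def G7_def G8_def E_def P_def Q_def ..
  have S1e: "S1 = (u * g1) * (v * g2) * (w * g3) * g4 / ((F1 * (f * G5)) * G6 * (Q * G8) * (P * G7))"
    unfolding dg2' Gamma_plus1[OF lower(2)] Gamma_plus1[OF lower(3)] Gamma_plus1[OF lower(4)]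
      Gamma_plus1[OF fp1] Gamma_plus1[OF gammas(1)] Gamma_plus1[OF gammas(4)] Gamma_plus1[OF gammas(3)]
      g1_def g2_def g3_def g4_def G5_def G6_def G7_def G8_def P_def Q_def u_def v_def w_def F1_def ..
  have Ke: "K = f * F1 * a1 * d1 * d2 / (u * v * w)"
    unfolding K_def u_def v_def w_def F1_def by (simp add: algebra_simps)
  have c1e: "c1 = 4 / H" unfolding c1_def H_def ..
  have H0: "H \<noteq> 0"
  proof
    assume "H = 0"
    hence "(f - 3) * (f + 1) = 0" unfolding H_def by (simp add: power2_eq_square algebra_simps)
    hence "f = 3 \<or> f = -1" by (auto simp: eq_neg_iff_add_eq_0)
    moreover have "f \<noteq> 3" using lower(1) by auto
    moreover have "f \<noteq> -1" using gammas(1) by auto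
    ultimately show False by blast
  qed
  have kinv: "Gamma k / Gamma (k + 1) = (E + 4 * a1 * d1 * d2 / H) / (P * Q)"
  proof -
    have hH: "h = H / (4 * a1)" unfolding h_def H_def by (simp add: field_simps power2_eq_square)
    have "k = H / (4 * a1) * (- P) * (- Q) / (d1 * d2 - H / (4 * a1) * (- E))"
    proof -
      have e1: "1 + d1 + a1 - f = - P" "1 + d2 + a1 - f = - Q" "1 + d1 + d2 + a1 - f = - E"
        unfolding P_def Q_def E_def by simp_all
      show ?thesis unfolding k_def e1 hH ..
    qed
    have "Gamma k / Gamma (k + 1) = 1 / k"
      using Gamma_plus1[OF k] nz[OF k] Gamma_eq_zero_iff[of k] k by (simp add: field_simps)
    also have "1 / k = 1 / (H / (4 * a1) * (- P) * (- Q) / (d1 * d2 - H / (4 * a1) * (- E)))" using \<open>k = _\<close> by simp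
    also have "\<dots> = (E + 4 * a1 * d1 * d2 / H) / (P * Q)"
      by (rule kinv_aux[OF a1 H0]) (use gammas(3) gammas(4) in \<open>auto simp: P_def Q_def\<close>)
    finally show ?thesis .
  qed
  have nzs: "G5 \<noteq> 0" "G6 \<noteq> 0" "G7 \<noteq> 0" "G8 \<noteq> 0" "P \<noteq> 0" "Q \<noteq> 0" "u \<noteq> 0" "v \<noteq> 0" "w \<noteq> 0" "f \<noteq> 0" "F1 \<noteq> 0"
    unfolding G5_def G6_def G7_def G8_def P_def Q_def u_def v_def w_def F1_def
    using gammas lower fp1 by (auto simp: Gamma_eq_zero_iff)
  show ?thesis
    unfolding hyp S0e S1e Ke c1e kinv
    unfolding g1_def[symmetric] g2_def[symmetric] g3_def[symmetric] g4_def[symmetric] G5_def[symmetric] G6_def[symmetric] G7_def[symmetric] G8_def[symmetric]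
    by (rule final_aux[OF nzs H0])
qed

end
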